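(* For $n\geq0$ let $$D_n=\Big\{F:\mathbb{C}\to\mathbb{C}\text{ additive}\ \Big|\ F(\alpha^{n+1})=\sum_{i=1}^{n}\binom{n+1}{i}(-1)^{n-i}\,\alpha^{n+1-i}\,F(\alpha^i)\text{ for all }\alpha\in\mathbb{C}\Big\}$$ (so $D_0=\{0\}$ and $D_1$ is the set of derivations of $\mathbb{C}$). Then for every $n\geq1$, $D_n\subseteq D_{n+1}$. Moreover, if $D$ is a non-trivial derivation on $\mathbb{C}$, then the $(n+1)$-fold composition $D^{n+1}=D\circ\cdots\circ D$ belongs to $D_{n+1}\setminus D_n$.
   Context: A derivation on $\mathbb{C}$ is an additive map $D:\mathbb{C}\to\mathbb{C}$ with $D(xy)=xD(y)+yD(x)$. *)

theory Defs
  imports Complex_Main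
begin

definition additive_map :: "(complex \<Rightarrow> complex) \<Rightarrow> bool" where
  "additive_map F \<longleftrightarrow> (\<forall>x y. F (x + y) = F x + F y)"

definition derivation :: "(complex \<Rightarrow> complex) \<Rightarrow> bool" where
  "derivation D \<longleftrightarrow> additive_map D \<and> (\<forall>x y. D (x * y) = x * D y + y * D x)"

definition Dset :: "nat \<Rightarrow> (complex \<Rightarrow> complex) set" where
  "Dset n = {F. additive_map F \<and>
     (\<forall>\<alpha>. F (\<alpha> ^ (n + 1)) =
        (\<Sum>i = 1..n. of_nat ((n + 1) choose i) * (-1) ^ (n - i) * \<alpha> ^ (n + 1 - i) * F (\<alpha> ^ i)))}"

end

theory Submission
  imports Defs
begin

lemma pascal_gen:
  fixes A :: "nat \<Rightarrow> nat \<Rightarrow> 'a::comm_ring_1"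
  shows "(\<Sum>i\<le>k. of_nat (k choose i) * A (Suc i) (k - i)) + (\<Sum>i\<le>k. of_nat (k choose i) * A i (Suc k - i))
       = (\<Sum>i\<le>Suc k. of_nat (Suc k choose i) * A i (Suc k - i))"
proof -
  have e1: "(\<Sum>i\<le>k. of_nat (k choose i) * A i (Suc k - i)) = (\<Sum>i\<le>Suc k. of_nat (k choose i) * A i (Suc k - i))"
    by (simp add: binomial_eq_0)
  also have "\<dots> = A 0 (Suc k) + (\<Sum>i\<le>k. of_nat (k choose Suc i) * A (Suc i) (k - i))"
    by (subst sum.atMost_Suc_shift) simp
  finally have e1': "(\<Sum>i\<le>k. of_nat (k choose i) * A i (Suc k - i)) = A 0 (Suc k) + (\<Sum>i\<le>k. of_nat (k choose Suc i) * A (Suc i) (k - i))" .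
  have "(\<Sum>i\<le>Suc k. of_nat (Suc k choose i) * A i (Suc k - i)) = A 0 (Suc k) + (\<Sum>i\<le>k. of_nat (Suc k choose Suc i) * A (Suc i) (k - i))"
    by (subst sum.atMost_Suc_shift) simp
  also have "\<dots> = A 0 (Suc k) + (\<Sum>i\<le>k. of_nat (k choose i) * A (Suc i) (k - i)) + (\<Sum>i\<le>k. of_nat (k choose Suc i) * A (Suc i) (k - i))"
    by (simp add: sum.distrib ring_distribs)
  finally show ?thesis using e1' by simp
qed

definition adp :: "complex \<Rightarrow> (complex \<Rightarrow> complex) \<Rightarrow> (complex \<Rightarrow> complex)" where
  "adp a G = (\<lambda>x. G (a * x) - a * G x)"

lemma adp_pow_formula:
  "(adp a ^^ k) G x = (\<Sum>i\<le>k. of_nat (k choose i) * ((-a) ^ (k - i) * G (a ^ i * x)))"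
proof (induction k arbitrary: x)
  case 0 then show ?case by simp
next
  case (Suc k)
  have "(adp a ^^ Suc k) G x = (adp a ^^ k) G (a * x) - a * (adp a ^^ k) G x"
    by (simp add: adp_def)
  also have "\<dots> = (\<Sum>i\<le>k. of_nat (k choose i) * ((-a) ^ (k - i) * G (a ^ Suc i * x)))
      + (\<Sum>i\<le>k. of_nat (k choose i) * ((-a) ^ (Suc k - i) * G (a ^ i * x)))"
    unfolding Suc by (simp add: sum_distrib_left Suc_diff_le mult_ac sum_negf)
  also have "\<dots> = (\<Sum>i\<le>Suc k. of_nat (Suc k choose i) * ((-a) ^ (Suc k - i) * G (a ^ i * x)))"
    using pascal_gen[of k "\<lambda>i j. (-a) ^ j * G (a ^ i * x)"] by simp
  finally show ?case .
qed


lemma add_0: "additive_map G \<Longrightarrow> G 0 = 0"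
  unfolding additive_map_def by (metis add.right_neutral add_cancel_right_right)

lemma add_nat: "additive_map G \<Longrightarrow> G (of_nat t * y) = of_nat t * G y"
proof (induction t)
  case 0 then show ?case using add_0 by simp
next
  case (Suc t) then show ?case unfolding additive_map_def by (simp add: ring_distribs)
qed

lemma add_sum: "additive_map G \<Longrightarrow> G (\<Sum>i\<in>I. f i) = (\<Sum>i\<in>I. G (f i))"
proof (induction I rule: infinite_finite_induct)
  case (infinite A) then show ?case using add_0 by simp
next
  case empty then show ?case using add_0 by simp
next
  case (insert x F) then show ?case unfolding additive_map_def by simp
qed

lemma adp_additive: "additive_map G \<Longrightarrow> additive_map (adp a G)"
  unfolding additive_map_def adp_def by (simp add: ring_distribs)

lemma adpk_additive: "additive_map G \<Longrightarrow> additive_map ((adp a ^^ k) G)"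
  by (induction k) (auto intro: adp_additive)

lemma adp_comm: "adp a (adp b H) = adp b (adp a H)"
  unfolding adp_def by (rule ext) (simp add: algebra_simps)

lemma adp_commk: "adp a ((adp b ^^ j) H) = (adp b ^^ j) (adp a H)"
proof (induction j)
  case (Suc j)
  have "adp a ((adp b ^^ Suc j) H) = adp b (adp a ((adp b ^^ j) H))" by (simp add: adp_comm)
  then show ?case using Suc by simp
qed simp

lemma adp_one: "adp 1 G = (\<lambda>x. 0)"
  unfolding adp_def by simp

lemma E_link:
  "(adp a ^^ Suc n) F 1 = (-a) ^ Suc n * F 1 +
     (F (a ^ (n + 1)) - (\<Sum>i = 1..n. of_nat ((n + 1) choose i) * (-1) ^ (n - i) * a ^ (n + 1 - i) * F (a ^ i)))"
proof -
  have "(adp a ^^ Suc n) F 1 = (\<Sum>i\<le>Suc n. of_nat (Suc n choose i) * ((-a) ^ (Suc n - i) * F (a ^ i)))"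
    unfolding adp_pow_formula by simp
  also have "\<dots> = (\<Sum>i\<le>n. of_nat (Suc n choose i) * ((-a) ^ (Suc n - i) * F (a ^ i))) + F (a ^ Suc n)"
    by simp
  also have "(\<Sum>i\<le>n. of_nat (Suc n choose i) * ((-a) ^ (Suc n - i) * F (a ^ i)))
      = (-a) ^ Suc n * F 1 + (\<Sum>i=1..n. of_nat (Suc n choose i) * ((-a) ^ (Suc n - i) * F (a ^ i)))"
    by (simp add: atMost_atLeast0 sum.atLeast_Suc_atMost)
  also have "(\<Sum>i=1..n. of_nat (Suc n choose i) * ((-a) ^ (Suc n - i) * F (a ^ i)))
     = - (\<Sum>i = 1..n. of_nat ((n + 1) choose i) * (-1) ^ (n - i) * a ^ (n + 1 - i) * F (a ^ i))"
    unfolding sum_negf[symmetric]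
  proof (rule sum.cong)
    fix i assume "i \<in> {1..n}"
    then have "Suc n - i = Suc (n - i)" by auto
    then show "of_nat (Suc n choose i) * ((-a) ^ (Suc n - i) * F (a ^ i)) =
       - (of_nat ((n + 1) choose i) * (-1) ^ (n - i) * a ^ (n + 1 - i) * F (a ^ i))"
      by (simp add: power_minus[of a])
  qed simp
  finally show ?thesis by simp
qed

lemma Dset_iff:
  assumes "F 1 = 0"
  shows "F \<in> Dset n \<longleftrightarrow> additive_map F \<and> (\<forall>a. (adp a ^^ Suc n) F 1 = 0)"
proof -
  have "(adp a ^^ Suc n) F 1 = 0 \<longleftrightarrow> F (a ^ (n + 1)) = (\<Sum>i = 1..n. of_nat ((n + 1) choose i) * (-1) ^ (n - i) * a ^ (n + 1 - i) * F (a ^ i))" for a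
    using E_link[where a=a and n=n and F=F] assms by simp
  then show ?thesis unfolding Dset_def by auto
qed

lemma Dset_one:
  assumes "F \<in> Dset n" shows "F 1 = 0"
proof -
  have "(adp 1 ^^ Suc n) F 1 = 0" by (simp add: adp_one)
  moreover have "F (1 ^ (n + 1)) - (\<Sum>i = 1..n. of_nat ((n + 1) choose i) * (-1) ^ (n - i) * 1 ^ (n + 1 - i) * F (1 ^ i)) = 0"
  proof -
    have "\<forall>\<alpha>. F (\<alpha> ^ (n + 1)) = (\<Sum>i = 1..n. of_nat ((n + 1) choose i) * (-1) ^ (n - i) * \<alpha> ^ (n + 1 - i) * F (\<alpha> ^ i))"
      using assms unfolding Dset_def by blast
    from spec[OF this, of 1] show ?thesis by simp
  qed
  ultimately have "(-1::complex) ^ Suc n * F 1 = 0" using E_link[where a=1 and n=n and F=F] by simp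
  then show ?thesis by simp
qed


lemma adp_binom:
  assumes G: "additive_map G"
  shows "(adp (a + of_nat t * b) ^^ N) G x =
     (\<Sum>k\<le>N. of_nat (N choose k) * (of_nat t ^ k * (adp b ^^ k) ((adp a ^^ (N - k)) G) x))"
proof (induction N arbitrary: x)
  case 0 then show ?case by simp
next
  case (Suc N)
  define B where "B j m = (adp b ^^ j) ((adp a ^^ m) G)" for j m
  have Badd: "additive_map (B j m)" for j m unfolding B_def by (intro adpk_additive G)
  have Ba: "adp a (B j m) = B j (Suc m)" for j m unfolding B_def by (simp add: adp_commk)
  have Bb: "adp b (B j m) = B (Suc j) m" for j m unfolding B_def by simp
  have step: "B k m ((a + of_nat t * b) * x) - (a + of_nat t * b) * B k m x
       = B k (Suc m) x + of_nat t * B (Suc k) m x" for k m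
  proof -
    have "B k m ((a + of_nat t * b) * x) = B k m (a * x) + of_nat t * B k m (b * x)"
      using Badd[of k m] add_nat[OF Badd[of k m]] unfolding additive_map_def
      by (simp add: ring_distribs mult.assoc)
    then show ?thesis
      using fun_cong[OF Ba[of k m], of x] fun_cong[OF Bb[of k m], of x]
      by (simp add: adp_def algebra_simps)
  qed
  have "(adp (a + of_nat t * b) ^^ Suc N) G x =
      (adp (a + of_nat t * b) ^^ N) G ((a + of_nat t * b) * x) - (a + of_nat t * b) * (adp (a + of_nat t * b) ^^ N) G x"
    by (simp add: adp_def)
  also have "\<dots> = (\<Sum>k\<le>N. of_nat (N choose k) * (of_nat t ^ k * (B k (N - k) ((a + of_nat t * b) * x) - (a + of_nat t * b) * B k (N - k) x)))"
    unfolding Suc B_def by (simp add: sum_distrib_left sum_subtractf algebra_simps)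
  also have "\<dots> = (\<Sum>k\<le>N. of_nat (N choose k) * (of_nat t ^ (Suc k) * B (Suc k) (N - k) x))
      + (\<Sum>k\<le>N. of_nat (N choose k) * (of_nat t ^ k * B k (Suc N - k) x))"
    unfolding step by (simp add: sum.distrib algebra_simps Suc_diff_le)
  also have "\<dots> = (\<Sum>k\<le>Suc N. of_nat (Suc N choose k) * (of_nat t ^ k * B k (Suc N - k) x))"
    using pascal_gen[of N "\<lambda>i j. of_nat t ^ i * B i j x"] by simp
  finally show ?case unfolding B_def .
qed

lemma polar1:
  assumes G: "additive_map G" and E: "\<And>y. (adp y ^^ N) G 1 = 0" and N: "N \<ge> 1"
  shows "adp b ((adp a ^^ (N - 1)) G) 1 = 0"
proof -
  define c where "c k = of_nat (N choose k) * (adp b ^^ k) ((adp a ^^ (N - k)) G) 1" for k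
  have z: "(\<Sum>k\<le>N. c k * z ^ k) = 0" if "z \<in> range of_nat" for z
  proof -
    from that obtain t where "z = of_nat t" by auto
    then show ?thesis using adp_binom[OF G, where a=a and t=t and b=b and N=N and x=1] E[where y="a + of_nat t * b"]
      unfolding c_def by (simp add: mult_ac)
  qed
  have "infinite (range (of_nat :: nat \<Rightarrow> complex))"
    using infinite_UNIV_char_0 by (metis finite_imageD inj_of_nat)
  then have "\<not> finite {z. (\<Sum>k\<le>N. c k * z ^ k) = 0}"
    using z by (metis (mono_tags, lifting) finite_subset mem_Collect_eq subsetI)
  then have "c 1 = 0" using polyfun_roots_finite[of c 1 N] N by blast
  then show ?thesis unfolding c_def using N by simp
qed

lemma part1:
  assumes F: "F \<in> Dset n" and n: "n \<ge> 1"
  shows "F \<in> Dset (n + 1)"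
proof -
  have F1: "F 1 = 0" using Dset_one[OF F] .
  have FA: "additive_map F" and E: "\<And>y. (adp y ^^ Suc n) F 1 = 0"
    using F Dset_iff[where F=F and n=n, OF F1] by auto
  have P: "adp b ((adp a ^^ n) F) 1 = 0" for a b
    using polar1[OF FA E, where a=a and b=b] by simp
  have "(adp a ^^ Suc (Suc n)) F 1 = 0" for a
  proof -
    define G where "G = (adp a ^^ n) F"
    have "adp (a*a) G 1 = 0" using P[where a=a and b="a*a"] unfolding G_def by simp
    then have 1: "G (a * a) - a * a * G 1 = 0" by (simp add: adp_def)
    have "adp a G 1 = 0" using P[where a=a and b="a"] unfolding G_def by simp
    then have 2: "G a - a * G 1 = 0" by (simp add: adp_def)
    have "(adp a ^^ Suc (Suc n)) F 1 = adp a (adp a G) 1" unfolding G_def by simp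
    also have "\<dots> = 0" unfolding adp_def using 1 2 by (simp add: algebra_simps)
    finally show ?thesis .
  qed
  then show ?thesis using Dset_iff[where F=F and n="n+1", OF F1] FA by simp
qed


lemma der_add: "derivation D \<Longrightarrow> additive_map D"
  unfolding derivation_def by simp

lemma der_one: "derivation D \<Longrightarrow> D 1 = 0"
  unfolding derivation_def by (metis add_cancel_right_right mult_1)

lemma derk_add: "derivation D \<Longrightarrow> additive_map (D ^^ k)"
proof (induction k)
  case 0 then show ?case by (simp add: additive_map_def)
next
  case (Suc k) then show ?case using der_add[OF Suc.prems] unfolding additive_map_def by simp
qed

lemma leibniz:
  assumes D: "derivation D"
  shows "(D ^^ p) (a * x) = (\<Sum>j\<le>p. of_nat (p choose j) * ((D ^^ j) a * (D ^^ (p - j)) x))"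
proof (induction p)
  case 0 then show ?case by simp
next
  case (Suc p)
  have DA: "additive_map D" using der_add[OF D] .
  have DM: "D (u * v) = u * D v + v * D u" for u v using D unfolding derivation_def by blast
  have "(D ^^ Suc p) (a * x) = D (\<Sum>j\<le>p. of_nat (p choose j) * ((D ^^ j) a * (D ^^ (p - j)) x))"
    using Suc by simp
  also have "\<dots> = (\<Sum>j\<le>p. of_nat (p choose j) * D ((D ^^ j) a * (D ^^ (p - j)) x))"
    by (simp add: add_sum[OF DA] add_nat[OF DA])
  also have "\<dots> = (\<Sum>j\<le>p. of_nat (p choose j) * ((D ^^ Suc j) a * (D ^^ (p - j)) x))
     + (\<Sum>j\<le>p. of_nat (p choose j) * ((D ^^ j) a * (D ^^ (Suc p - j)) x))"
    by (simp add: DM sum.distrib ring_distribs Suc_diff_le mult_ac)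
  also have "\<dots> = (\<Sum>j\<le>Suc p. of_nat (Suc p choose j) * ((D ^^ j) a * (D ^^ (Suc p - j)) x))"
    using pascal_gen[of p "\<lambda>i j. (D ^^ i) a * (D ^^ j) x"] by simp
  finally show ?case .
qed

definition low :: "(complex \<Rightarrow> complex) \<Rightarrow> nat \<Rightarrow> (complex \<Rightarrow> complex) \<Rightarrow> bool" where
  "low D r H \<longleftrightarrow> (\<exists>b. \<forall>x. H x = (\<Sum>p<r. b p * (D ^^ p) x))"

lemma low_zero: "low D r (\<lambda>x. 0)"
  unfolding low_def by (rule exI[of _ "\<lambda>_. 0"]) simp

lemma low_add: "low D r H1 \<Longrightarrow> low D r H2 \<Longrightarrow> low D r (\<lambda>x. H1 x + H2 x)"
  unfolding low_def
proof (elim exE)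
  fix b1 b2 assume "\<forall>x. H1 x = (\<Sum>p<r. b1 p * (D ^^ p) x)" "\<forall>x. H2 x = (\<Sum>p<r. b2 p * (D ^^ p) x)"
  then show "\<exists>b. \<forall>x. H1 x + H2 x = (\<Sum>p<r. b p * (D ^^ p) x)"
    by (intro exI[of _ "\<lambda>p. b1 p + b2 p"]) (simp add: sum.distrib distrib_right)
qed

lemma low_scal: "low D r H \<Longrightarrow> low D r (\<lambda>x. c * H x)"
  unfolding low_def
proof (elim exE)
  fix b assume "\<forall>x. H x = (\<Sum>p<r. b p * (D ^^ p) x)"
  then show "\<exists>b. \<forall>x. c * H x = (\<Sum>p<r. b p * (D ^^ p) x)"
    by (intro exI[of _ "\<lambda>p. c * b p"]) (simp add: sum_distrib_left mult.assoc)
qed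

lemma low_mono: "low D r H \<Longrightarrow> r \<le> s \<Longrightarrow> low D s H"
  unfolding low_def
proof (elim exE)
  fix b assume b: "\<forall>x. H x = (\<Sum>p<r. b p * (D ^^ p) x)" and rs: "r \<le> s"
  show "\<exists>b. \<forall>x. H x = (\<Sum>p<s. b p * (D ^^ p) x)"
  proof (intro exI[of _ "\<lambda>p. if p < r then b p else 0"] allI)
    fix x
    have "(\<Sum>p<s. (if p < r then b p else 0) * (D ^^ p) x) = (\<Sum>p<r. b p * (D ^^ p) x)"
      by (rule sum.mono_neutral_cong_right) (use rs in auto)
    then show "H x = (\<Sum>p<s. (if p < r then b p else 0) * (D ^^ p) x)" using b by simp
  qed
qed

lemma low_basic: "p < r \<Longrightarrow> low D r (\<lambda>x. c * (D ^^ p) x)"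
  unfolding low_def
proof (intro exI[of _ "\<lambda>i. if i = p then c else 0"] allI)
  fix x assume pr: "p < r"
  have "(\<Sum>i<r. (if i = p then c else 0) * (D ^^ i) x) = (\<Sum>i<r. if i = p then c * (D ^^ i) x else 0)"
    by (rule sum.cong) auto
  also have "\<dots> = c * (D ^^ p) x" using pr by (simp add: sum.delta)
  finally show "c * (D ^^ p) x = (\<Sum>i<r. (if i = p then c else 0) * (D ^^ i) x)" by simp
qed

lemma low_sum: "finite I \<Longrightarrow> (\<And>i. i \<in> I \<Longrightarrow> low D r (H i)) \<Longrightarrow> low D r (\<lambda>x. \<Sum>i\<in>I. H i x)"
proof (induction I rule: finite_induct)
  case empty then show ?case using low_zero by simp
next
  case (insert i I) then show ?case using low_add[of D r "H i" "\<lambda>x. \<Sum>i\<in>I. H i x"] by simp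
qed

lemma low_0: "low D 0 H \<Longrightarrow> H = (\<lambda>x. 0)"
  unfolding low_def by auto


lemma L1:
  assumes D: "derivation D"
  shows "low D p (\<lambda>x. (D ^^ p) (a * x) - a * (D ^^ p) x)"
proof -
  have e: "(D ^^ p) (a * x) - a * (D ^^ p) x = (\<Sum>j\<in>{1..p}. (of_nat (p choose j) * (D ^^ j) a) * (D ^^ (p - j)) x)" for x
    unfolding leibniz[OF D] by (simp add: atMost_atLeast0 sum.atLeast_Suc_atMost mult.assoc)
  show ?thesis unfolding e
    by (rule low_sum) (auto intro: low_basic)
qed

lemma L2:
  assumes D: "derivation D" and q: "q \<ge> 1"
  shows "low D (q - 1) (\<lambda>x. (D ^^ q) (a * x) - a * (D ^^ q) x - of_nat q * D a * (D ^^ (q - 1)) x)"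
proof -
  have e: "(D ^^ q) (a * x) - a * (D ^^ q) x - of_nat q * D a * (D ^^ (q - 1)) x
       = (\<Sum>j\<in>{2..q}. (of_nat (q choose j) * (D ^^ j) a) * (D ^^ (q - j)) x)" for x
  proof -
    have "(D ^^ q) (a * x) = (\<Sum>j\<in>{0..q}. of_nat (q choose j) * ((D ^^ j) a * (D ^^ (q - j)) x))"
      unfolding leibniz[OF D] by (simp add: atMost_atLeast0)
    also have "\<dots> = a * (D ^^ q) x + (of_nat q * D a * (D ^^ (q - 1)) x
        + (\<Sum>j\<in>{2..q}. (of_nat (q choose j) * (D ^^ j) a) * (D ^^ (q - j)) x))"
      using q by (simp add: sum.atLeast_Suc_atMost mult.assoc numeral_2_eq_2)
    finally show ?thesis by simp
  qed
  show ?thesis unfolding e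
    by (rule low_sum) (auto intro: low_basic)
qed

lemma low_adp:
  assumes D: "derivation D" and R: "low D r R"
  shows "low D (r - 1) (adp a R)"
proof -
  obtain b where b: "\<And>x. R x = (\<Sum>p<r. b p * (D ^^ p) x)" using R unfolding low_def by blast
  have e: "adp a R = (\<lambda>x. \<Sum>p<r. b p * ((D ^^ p) (a * x) - a * (D ^^ p) x))"
    unfolding adp_def b by (rule ext) (simp add: sum_distrib_left sum_subtractf algebra_simps)
  show ?thesis unfolding e
    by (rule low_sum) (auto intro!: low_scal low_mono[OF L1[OF D]])
qed

lemma top:
  assumes D: "derivation D" and k: "k \<le> m"
  shows "\<exists>c. (D a \<noteq> 0 \<longrightarrow> c \<noteq> 0) \<and> low D (m - k) (\<lambda>x. (adp a ^^ k) (D ^^ m) x - c * (D ^^ (m - k)) x)"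
  using k
proof (induction k)
  case 0
  show ?case by (rule exI[of _ 1]) (simp add: low_zero)
next
  case (Suc k)
  then obtain c where c: "D a \<noteq> 0 \<longrightarrow> c \<noteq> 0"
    and R: "low D (m - k) (\<lambda>x. (adp a ^^ k) (D ^^ m) x - c * (D ^^ (m - k)) x)" by auto
  define q where "q = m - k"
  have q: "q \<ge> 1" "m - Suc k = q - 1" using Suc.prems unfolding q_def by auto
  define H where "H = (adp a ^^ k) (D ^^ m)"
  define R' where "R' = (\<lambda>x. H x - c * (D ^^ q) x)"
  have R': "low D q R'" using R unfolding R'_def H_def q_def .
  have e: "(\<lambda>x. (adp a ^^ Suc k) (D ^^ m) x - (c * of_nat q * D a) * (D ^^ (q - 1)) x)
    = (\<lambda>x. c * ((D ^^ q) (a * x) - a * (D ^^ q) x - of_nat q * D a * (D ^^ (q - 1)) x) + adp a R' x)"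
    unfolding R'_def H_def by (rule ext) (simp add: adp_def algebra_simps)
  have "low D (q - 1) (\<lambda>x. (adp a ^^ Suc k) (D ^^ m) x - (c * of_nat q * D a) * (D ^^ (q - 1)) x)"
    unfolding e by (intro low_add low_scal L2[OF D q(1)] low_adp[OF D R'])
  moreover have "D a \<noteq> 0 \<longrightarrow> c * of_nat q * D a \<noteq> 0" using c q by auto
  ultimately show ?case using q(2) by (intro exI[of _ "c * of_nat q * D a"]) simp
qed

lemma top_final:
  assumes D: "derivation D"
  shows "\<exists>c. (D a \<noteq> 0 \<longrightarrow> c \<noteq> 0) \<and> (adp a ^^ m) (D ^^ m) = (\<lambda>x. c * x)"
proof -
  obtain c where c: "D a \<noteq> 0 \<longrightarrow> c \<noteq> 0"
    and R: "low D 0 (\<lambda>x. (adp a ^^ m) (D ^^ m) x - c * (D ^^ 0) x)"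
    using top[OF D, of m m a] by auto
  have "(adp a ^^ m) (D ^^ m) = (\<lambda>x. c * x)"
    using fun_cong[OF low_0[OF R]] by (intro ext) simp
  then show ?thesis using c by blast
qed

lemma derk_one: "derivation D \<Longrightarrow> (D ^^ Suc k) 1 = 0"
  using der_one[of D] add_0[OF derk_add[of D k]] by (simp add: funpow_Suc_right del: funpow.simps)

theorem proposition4p4:
  fixes n :: nat and D :: "complex \<Rightarrow> complex"
  assumes "n \<ge> 1"
  shows "Dset n \<subseteq> Dset (n + 1) \<and>
    (derivation D \<and> D \<noteq> (\<lambda>x. 0) \<longrightarrow> (D ^^ (n + 1)) \<in> Dset (n + 1) - Dset n)"
proof (intro conjI impI)
  show "Dset n \<subseteq> Dset (n + 1)" using part1 assms by blast
next
  assume a: "derivation D \<and> D \<noteq> (\<lambda>x. 0)"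
  then have D: "derivation D" by blast
  obtain a0 where a0: "D a0 \<noteq> 0" using a by auto
  define F where "F = D ^^ Suc n"
  have F1: "F 1 = 0" unfolding F_def using derk_one[OF D] .
  have FA: "additive_map F" unfolding F_def using derk_add[OF D] .
  have "(adp a ^^ Suc (Suc n)) F 1 = 0" for a
  proof -
    obtain c where "(adp a ^^ Suc n) F = (\<lambda>x. c * x)"
      using top_final[OF D, of a "Suc n"] unfolding F_def by blast
    then show ?thesis by (simp add: adp_def)
  qed
  then have in1: "F \<in> Dset (n + 1)" using Dset_iff[where F=F and n="n+1", OF F1] FA by simp
  obtain c where c: "c \<noteq> 0" "(adp a0 ^^ Suc n) F = (\<lambda>x. c * x)"
    using top_final[OF D, of a0 "Suc n"] a0 unfolding F_def by blast
  have "(adp a0 ^^ Suc n) F 1 = c" using c(2) by (simp del: funpow.simps)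
  then have "F \<notin> Dset n" using Dset_iff[where F=F and n=n, OF F1] c(1) by (auto simp del: funpow.simps)
  then show "(D ^^ (n + 1)) \<in> Dset (n + 1) - Dset n" using in1 unfolding F_def by simp
qed

end
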